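(* Let $\mathcal C$ be a class of compact spaces. Then $\mathcal C^{(\perp)}$ coincides with the class of compact spaces $K$ such that every closed subspace of every continuous image of $K$ that belongs to $\mathcal C$ is metrizable.
   Context: For a class $\mathcal C$ of compact spaces, $\mathcal C^{(\perp)}$ is the class of compact spaces $K$ such that every continuous image of any closed subspace of $K$ that belongs to $\mathcal C$ is metrizable. *)

theory Defs
  imports "HOL-Analysis.Analysis"
begin

text \<open>A compact space in the paper's sense: compact Hausdorff.\<close>
definition cpt_space :: "'a topology \<Rightarrow> bool" where
  "cpt_space X \<longleftrightarrow> compact_space X \<and> Hausdorff_space X"

definition in_class :: "'a topology \<Rightarrow> 'c topology set \<Rightarrow> bool" where
  "in_class X \<C> \<longleftrightarrow> (\<exists>Y\<in>\<C>. X homeomorphic_space Y)"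

text \<open>Continuous images of
  subspaces of K are represented on the carrier type of K (no loss, by cardinality).\<close>
definition perp_class :: "'c topology set \<Rightarrow> 'a topology set" where
  "perp_class \<C> = {K. cpt_space K \<and>
     (\<forall>F (L::'a topology) f. closedin K F \<and> cpt_space L \<and>
        continuous_map (subtopology K F) L f \<and> f ` F = topspace L \<and>
        in_class L \<C> \<longrightarrow> metrizable_space L)}"

end

theory Submission
  imports Defs
begin

lemma quot_topology_open:
  fixes K :: "'a topology" and q :: "'a \<Rightarrow> 'a"
  shows "openin (topology (\<lambda>U. U \<subseteq> q ` topspace K \<and> openin K {x\<in>topspace K. q x \<in> U})) =
         (\<lambda>U. U \<subseteq> q ` topspace K \<and> openin K {x\<in>topspace K. q x \<in> U})"
proof (rule topology_inverse')
  show "istopology (\<lambda>U. U \<subseteq> q ` topspace K \<and> openin K {x\<in>topspace K. q x \<in> U})"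
    unfolding istopology_def
  proof (rule conjI; intro allI impI)
    fix S T
    assume S: "S \<subseteq> q ` topspace K \<and> openin K {x\<in>topspace K. q x \<in> S}"
      and T: "T \<subseteq> q ` topspace K \<and> openin K {x\<in>topspace K. q x \<in> T}"
    have "{x\<in>topspace K. q x \<in> S \<inter> T} = {x\<in>topspace K. q x \<in> S} \<inter> {x\<in>topspace K. q x \<in> T}"
      by auto
    moreover have "openin K ({x\<in>topspace K. q x \<in> S} \<inter> {x\<in>topspace K. q x \<in> T})"
      using S T by (intro openin_Int) auto
    ultimately show "S \<inter> T \<subseteq> q ` topspace K \<and> openin K {x\<in>topspace K. q x \<in> S \<inter> T}"
      using S T by auto
  next
    fix \<K> :: "'a set set"
    assume H: "\<forall>U\<in>\<K>. U \<subseteq> q ` topspace K \<and> openin K {x\<in>topspace K. q x \<in> U}"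
    have "{x\<in>topspace K. q x \<in> \<Union>\<K>} = \<Union>((\<lambda>U. {x\<in>topspace K. q x \<in> U}) ` \<K>)"
      by auto
    moreover have "openin K (\<Union>((\<lambda>U. {x\<in>topspace K. q x \<in> U}) ` \<K>))"
      using H by (intro openin_Union) auto
    ultimately show "\<Union>\<K> \<subseteq> q ` topspace K \<and> openin K {x\<in>topspace K. q x \<in> \<Union>\<K>}"
      using H by auto
  qed
qed

lemma perp_classD:
  fixes K L :: "'a topology" and \<C> :: "'c topology set"
  shows "K \<in> perp_class \<C> \<Longrightarrow> closedin K F \<Longrightarrow> cpt_space L \<Longrightarrow>
        continuous_map (subtopology K F) L f \<Longrightarrow> f ` F = topspace L \<Longrightarrow>
        in_class L \<C> \<Longrightarrow> metrizable_space L"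
  unfolding perp_class_def mem_Collect_eq
  apply (elim conjE)
  apply (drule spec[of _ F], drule spec[of _ L], drule spec[of _ f])
  apply (erule mp)
  apply (intro conjI)
  apply assumption+
  done

lemma perp_classI:
  fixes K :: "'a topology" and \<C> :: "'c topology set"
  assumes "cpt_space K"
    and "\<And>F (L::'a topology) f. closedin K F \<Longrightarrow> cpt_space L \<Longrightarrow>
        continuous_map (subtopology K F) L f \<Longrightarrow> f ` F = topspace L \<Longrightarrow>
        in_class L \<C> \<Longrightarrow> metrizable_space L"
  shows "K \<in> perp_class \<C>"
  unfolding perp_class_def mem_Collect_eq
  using assms by blast

theorem lemma2p3:
  fixes \<C> :: "'c topology set"
  assumes "\<forall>Y\<in>\<C>. cpt_space Y"
  shows "(perp_class \<C> :: 'a topology set) =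
    {K. cpt_space K \<and>
      (\<forall>(L::'a topology) f M. cpt_space L \<and> continuous_map K L f \<and>
         f ` topspace K = topspace L \<and> closedin L M \<and> in_class (subtopology L M) \<C>
         \<longrightarrow> metrizable_space (subtopology L M))}"
proof (intro set_eqI iffI)
  fix K :: "'a topology"
  assume "K \<in> perp_class \<C>"
  then have K: "cpt_space K" unfolding perp_class_def by blast
  have P: "\<And>F (L::'a topology) f. closedin K F \<Longrightarrow> cpt_space L \<Longrightarrow>
        continuous_map (subtopology K F) L f \<Longrightarrow> f ` F = topspace L \<Longrightarrow>
        in_class L \<C> \<Longrightarrow> metrizable_space L"
    using perp_classD[OF \<open>K \<in> perp_class \<C>\<close>] by blast
  show "K \<in> {K. cpt_space K \<and>
      (\<forall>(L::'a topology) f M. cpt_space L \<and> continuous_map K L f \<and>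
         f ` topspace K = topspace L \<and> closedin L M \<and> in_class (subtopology L M) \<C>
         \<longrightarrow> metrizable_space (subtopology L M))}"
  proof (intro CollectI conjI K allI impI)
    fix L :: "'a topology" and f M
    assume A: "cpt_space L \<and> continuous_map K L f \<and>
         f ` topspace K = topspace L \<and> closedin L M \<and> in_class (subtopology L M) \<C>"
    define F where "F = {x\<in>topspace K. f x \<in> M}"
    have cF: "closedin K F" unfolding F_def
      using A closedin_continuous_map_preimage by blast
    have Msub: "M \<subseteq> topspace L" using A closedin_subset by blast
    have cL: "cpt_space (subtopology L M)"
      using A unfolding cpt_space_def
      by (meson Hausdorff_space_subtopology closedin_compact_space compact_space_subtopology)
    have cont: "continuous_map (subtopology K F) (subtopology L M) f"
      using A unfolding F_def
      by (intro continuous_map_into_subtopology continuous_map_from_subtopology) auto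
    have im: "f ` F = topspace (subtopology L M)"
      using A Msub unfolding F_def by auto
    show "metrizable_space (subtopology L M)"
      using P[OF cF cL cont im] A by blast
  qed
next
  fix K :: "'a topology"
  assume "K \<in> {K. cpt_space K \<and>
      (\<forall>(L::'a topology) f M. cpt_space L \<and> continuous_map K L f \<and>
         f ` topspace K = topspace L \<and> closedin L M \<and> in_class (subtopology L M) \<C>
         \<longrightarrow> metrizable_space (subtopology L M))}"
  then have KK: "cpt_space K \<and>
      (\<forall>(L::'a topology) f M. cpt_space L \<and> continuous_map K L f \<and>
         f ` topspace K = topspace L \<and> closedin L M \<and> in_class (subtopology L M) \<C>
         \<longrightarrow> metrizable_space (subtopology L M))" by (rule CollectD)
  then have K: "cpt_space K" by (rule conjunct1)
  have H: "metrizable_space (subtopology L M)"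
    if "cpt_space L" "continuous_map K L f" "f ` topspace K = topspace L" "closedin L M"
       "in_class (subtopology L M) \<C>" for L :: "'a topology" and f M
    using KK that
    apply (elim conjE)
    apply (drule spec[of _ L], drule spec[of _ f], drule spec[of _ M])
    apply (erule mp)
    apply (intro conjI)
        apply assumption+
    done
  have Kc: "compact_space K" and KH: "Hausdorff_space K" using K cpt_space_def by auto
  have Kn: "normal_space K" using Kc KH compact_Hausdorff_or_regular_imp_normal_space by blast
  show "K \<in> perp_class \<C>"
  proof (rule perp_classI[OF K])
    fix F and L :: "'a topology" and g
    assume A: "closedin K F" "cpt_space L" "continuous_map (subtopology K F) L g"
        "g ` F = topspace L" "in_class L \<C>"
    have cF: "closedin K F" and Lc: "compact_space L" and LH: "Hausdorff_space L"
      and gc: "continuous_map (subtopology K F) L g" and gF: "g ` F = topspace L"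
      and inC: "in_class L \<C>"
      using A cpt_space_def by auto
    have FK: "F \<subseteq> topspace K" using cF closedin_subset by blast
    define r where "r x = (SOME z. z \<in> F \<and> g z = g x)" for x
    define q where "q x = (if x \<in> F then r x else x)" for x
    have r1: "r x \<in> F \<and> g (r x) = g x" if "x \<in> F" for x
      unfolding r_def by (rule someI[where x=x]) (use that in auto)
    have r2: "r x = r y" if "g x = g y" for x y
      unfolding r_def using that by simp
    have qF: "q x \<in> F" "g (q x) = g x" if "x \<in> F" for x
      using r1[OF that] that unfolding q_def by auto
    have qnF: "q x = x" if "x \<notin> F" for x
      using that unfolding q_def by auto
    have qinj: "q x = q y" if "x \<in> F" "y \<in> F" "g x = g y" for x y
      using that r2[of x y] unfolding q_def by simp
    have qq: "q (q x) = q x" for x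
    proof (cases "x \<in> F")
      case True
      then show ?thesis using qF[OF True] qinj[of "q x" x] by auto
    qed (simp add: qnF)
    have qK: "q x \<in> topspace K" if "x \<in> topspace K" for x
      using that qF FK qnF by (cases "x \<in> F") auto
    define R where "R = q ` topspace K"
    define Q where "Q = topology (\<lambda>U. U \<subseteq> q ` topspace K \<and> openin K {x\<in>topspace K. q x \<in> U})"
    have oQ: "openin Q U \<longleftrightarrow> U \<subseteq> R \<and> openin K {x\<in>topspace K. q x \<in> U}" for U
      unfolding Q_def R_def quot_topology_open by simp
    have "{x\<in>topspace K. q x \<in> q ` topspace K} = topspace K" by auto
    then have "openin Q R" unfolding oQ R_def by simp
    have tQ: "topspace Q = R"
    proof (rule subset_antisym)
      show "topspace Q \<subseteq> R" using oQ[of "topspace Q"] by simp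
      show "R \<subseteq> topspace Q" using \<open>openin Q R\<close> openin_subset by blast
    qed
    have RK: "R \<subseteq> topspace K" unfolding R_def using qK by auto
    have qm: "quotient_map K Q q"
      unfolding quotient_map_def tQ oQ R_def by simp
    have qc: "continuous_map K Q q" using qm quotient_imp_continuous_map by blast
    have Qc: "compact_space Q"
      using image_compactin[OF _ qc, of "topspace K"] Kc tQ R_def
      unfolding compact_space_def by simp
    have sep: "\<exists>h. continuous_map K euclideanreal h \<and> (\<forall>x\<in>topspace K. h (q x) = h x) \<and> h a \<noteq> h b"
      if ab: "a \<in> R" "b \<in> R" "a \<noteq> b" for a b
    proof -
      have aK: "a \<in> topspace K" and bK: "b \<in> topspace K" using ab RK by auto
      have qa: "q a = a" and qb: "q b = b" using ab qq unfolding R_def by auto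
      have t1: "t1_space K" using KH Hausdorff_imp_t1_space by blast
      have urys: "\<exists>h. continuous_map K euclideanreal h \<and> (\<forall>x\<in>topspace K. h (q x) = h x) \<and> h c \<noteq> h d"
        if "c \<in> topspace K" "d \<in> topspace K" "c \<notin> F" "c \<noteq> d" for c d
      proof -
        have c1: "closedin K {c}" using closedin_t1_singleton[OF t1 that(1)] .
        have c2: "closedin K (F \<union> {d})"
          using closedin_Un[OF cF closedin_t1_singleton[OF t1 that(2)]] .
        have dj: "disjnt {c} (F \<union> {d})" using that by (simp add: disjnt_def)
        obtain h where h: "continuous_map K (top_of_set {0..1::real}) h"
          "h ` {c} \<subseteq> {0}" "h ` (F \<union> {d}) \<subseteq> {1}"
          using Urysohn_lemma[OF Kn c1 c2 dj zero_le_one] by blast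
        have hc: "continuous_map K euclideanreal h"
          using h(1) continuous_map_in_subtopology by blast
        have "h (q x) = h x" if "x \<in> topspace K" for x
        proof (cases "x \<in> F")
          case True
          then show ?thesis using qF(1)[OF True] h(3) by (simp add: image_subset_iff)
        qed (simp add: qnF)
        then show ?thesis using hc h(2,3) by (intro exI[of _ h]) auto
      qed
      show ?thesis
      proof (cases "a \<in> F")
        case aF: True
        show ?thesis
        proof (cases "b \<in> F")
          case bF: True
          have gab: "g a \<noteq> g b" using qinj[OF aF bF] qa qb ab by auto
          have tL: "t1_space L" using LH Hausdorff_imp_t1_space by blast
          have Ln: "normal_space L" using Lc LH compact_Hausdorff_or_regular_imp_normal_space by blast
          have gaL: "g a \<in> topspace L" "g b \<in> topspace L" using gF aF bF by auto
          have djg: "disjnt {g a} {g b}" using gab by simp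
          obtain \<phi> where \<phi>: "continuous_map L (top_of_set {0..1::real}) \<phi>"
            "\<phi> ` {g a} \<subseteq> {0}" "\<phi> ` {g b} \<subseteq> {1}"
            using Urysohn_lemma[OF Ln closedin_t1_singleton[OF tL gaL(1)] closedin_t1_singleton[OF tL gaL(2)] djg zero_le_one]
            by blast
          have \<phi>c: "continuous_map L euclideanreal \<phi>"
            using \<phi>(1) continuous_map_in_subtopology by blast
          have pgc: "continuous_map (subtopology K F) euclideanreal (\<phi> \<circ> g)"
            using gc \<phi>c continuous_map_compose by blast
          have pgim: "(\<phi> \<circ> g) ` F \<subseteq> {0..1}"
          proof
            fix y assume "y \<in> (\<phi> \<circ> g) ` F"
            then obtain x where x: "x \<in> F" "y = \<phi> (g x)" by auto
            then have "g x \<in> topspace L" using gF by blast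
            then show "y \<in> {0..1}"
              using continuous_map_image_subset_topspace[OF \<phi>(1)] x(2) by auto
          qed
          obtain h where h: "continuous_map K euclideanreal h" "\<And>x. x \<in> F \<Longrightarrow> h x = (\<phi> \<circ> g) x"
            "h ` topspace K \<subseteq> {0..1}"
            by (rule Tietze_extension_closed_real_interval[OF Kn cF pgc pgim zero_le_one]) blast
          have "h (q x) = h x" if "x \<in> topspace K" for x
          proof (cases "x \<in> F")
            case True
            then show ?thesis using qF[OF True] h(2) by auto
          qed (simp add: qnF)
          moreover have "h a \<noteq> h b" using h(2)[OF aF] h(2)[OF bF] \<phi>(2,3) by auto
          ultimately show ?thesis using h(1) by blast
        next
          case False
          then obtain h where "continuous_map K euclideanreal h" "\<forall>x\<in>topspace K. h (q x) = h x" "h b \<noteq> h a"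
            using urys[OF bK aK False] ab by auto
          then show ?thesis by metis
        qed
      next
        case False
        then show ?thesis using urys[OF aK bK False] ab by auto
      qed
    qed
    have QH: "Hausdorff_space Q"
      unfolding Hausdorff_space_def
    proof (intro allI impI)
      fix a b assume ab: "a \<in> topspace Q \<and> b \<in> topspace Q \<and> a \<noteq> b"
      then obtain h where h: "continuous_map K euclideanreal h" "\<forall>x\<in>topspace K. h (q x) = h x" "h a \<noteq> h b"
        using sep[of a b] ab unfolding tQ by blast
      define e where "e = dist (h a) (h b) / 2"
      have e: "e > 0" using h(3) unfolding e_def by auto
      have qR: "q x \<in> R" if "x \<in> topspace K" for x
        unfolding R_def using that by blast
      have op: "openin Q {y\<in>R. h y \<in> ball c e}" for c
      proof -
        have eq: "{x\<in>topspace K. q x \<in> {y\<in>R. h y \<in> ball c e}} = {x\<in>topspace K. h x \<in> ball c e}"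
        proof (rule set_eqI)
          fix x
          show "x \<in> {x\<in>topspace K. q x \<in> {y\<in>R. h y \<in> ball c e}} \<longleftrightarrow> x \<in> {x\<in>topspace K. h x \<in> ball c e}"
          proof (cases "x \<in> topspace K")
            case True
            then show ?thesis using h(2) qR[OF True] by simp
          qed simp
        qed
        have "openin K {x\<in>topspace K. h x \<in> ball c e}"
          by (rule openin_continuous_map_preimage[OF h(1)]) simp
        then have "openin K {x\<in>topspace K. q x \<in> {y\<in>R. h y \<in> ball c e}}"
          by (simp only: eq)
        moreover have "{y\<in>R. h y \<in> ball c e} \<subseteq> R" by blast
        ultimately show ?thesis by (simp only: oQ)
      qed
      have nb: "False" if "dist (h a) y < e" "dist (h b) y < e" for y
        using that unfolding e_def dist_real_def by (auto simp: abs_if split: if_split_asm)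
      have dj: "disjnt {y\<in>R. h y \<in> ball (h a) e} {y\<in>R. h y \<in> ball (h b) e}"
        unfolding disjnt_def using nb by auto
      have aR: "a \<in> R" and bR: "b \<in> R" using ab tQ by auto
      show "\<exists>U V. openin Q U \<and> openin Q V \<and> a \<in> U \<and> b \<in> V \<and> disjnt U V"
      proof (intro exI conjI)
        show "openin Q {y\<in>R. h y \<in> ball (h a) e}" by (rule op)
        show "openin Q {y\<in>R. h y \<in> ball (h b) e}" by (rule op)
        show "a \<in> {y\<in>R. h y \<in> ball (h a) e}" using aR e by simp
        show "b \<in> {y\<in>R. h y \<in> ball (h b) e}" using bR e by simp
      qed (rule dj)
    qed
    define M where "M = q ` F"
    have MR: "M \<subseteq> R" unfolding M_def R_def using FK by auto
    have pre: "{x\<in>topspace K. q x \<in> R - M} = topspace K - F"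
    proof -
      have "q x \<in> M \<longleftrightarrow> x \<in> F" if "x \<in> topspace K" for x
      proof
        assume "q x \<in> M"
        then obtain y where y: "y \<in> F" "q x = q y" unfolding M_def by auto
        show "x \<in> F"
        proof (rule ccontr)
          assume "x \<notin> F"
          then have "x = q y" using y qnF by auto
          then show False using qF(1)[OF y(1)] \<open>x \<notin> F\<close> by auto
        qed
      qed (auto simp: M_def)
      then show ?thesis using R_def qK by auto
    qed
    have cM: "closedin Q M"
      unfolding closedin_def tQ oQ pre using MR cF by (auto simp: closedin_def)
    have tQM: "topspace (subtopology Q M) = M" using MR tQ by auto
    have qFc: "continuous_map (subtopology K F) (subtopology Q M) q"
      using qc unfolding M_def
      by (intro continuous_map_into_subtopology continuous_map_from_subtopology) (auto simp: FK)
    have KFc: "compact_space (subtopology K F)"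
      using Kc cF closedin_compact_space compact_space_subtopology by blast
    have QMH: "Hausdorff_space (subtopology Q M)" using QH Hausdorff_space_subtopology by blast
    have QMc: "compact_space (subtopology Q M)"
      using Qc cM closedin_compact_space compact_space_subtopology by blast
    have qFq: "quotient_map (subtopology K F) (subtopology Q M) q"
      using continuous_closed_imp_quotient_map[OF qFc continuous_imp_closed_map[OF qFc KFc QMH]]
        tQM FK unfolding M_def by auto
    have "continuous_map (subtopology K F) L (g \<circ> q)"
      using gc by (rule continuous_map_eq) (use FK qF in auto)
    then have gMc: "continuous_map (subtopology Q M) L g"
      using continuous_compose_quotient_map[OF qFq] by blast
    have "(\<lambda>x. g (q x)) ` F = g ` F"
      by (rule image_cong[OF refl]) (rule qF(2))
    then have "g ` M = topspace L" unfolding M_def image_image gF .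
    then have gM: "g ` topspace (subtopology Q M) = topspace L"
      by (simp only: tQM)
    have injg: "inj_on g (topspace (subtopology Q M))"
    proof (rule inj_onI)
      fix u v assume uv: "u \<in> topspace (subtopology Q M)" "v \<in> topspace (subtopology Q M)" "g u = g v"
      have "u \<in> M" "v \<in> M" using uv(1,2) tQM by simp_all
      then obtain x y where xy: "x \<in> F" "y \<in> F" "u = q x" "v = q y"
        unfolding M_def by blast
      then have "g x = g y" using uv(3) qF(2) by metis
      then show "u = v" using qinj[OF xy(1,2)] xy(3,4) by simp
    qed
    have "homeomorphic_map (subtopology Q M) L g"
      using continuous_imp_homeomorphic_map[OF gMc QMc LH gM injg] .
    then have hom: "subtopology Q M homeomorphic_space L"
      using homeomorphic_map_imp_homeomorphic_space by blast
    have inQM: "in_class (subtopology Q M) \<C>"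
      using inC hom homeomorphic_space_trans unfolding in_class_def by blast
    have qeq: "q ` topspace K = topspace Q" using tQ R_def by simp
    have cQ: "cpt_space Q" unfolding cpt_space_def using Qc QH by simp
    have "metrizable_space (subtopology Q M)"
      by (rule H[OF cQ qc qeq cM inQM])
    then show "metrizable_space L"
      using hom homeomorphic_metrizable_space by blast
  qed
qed

end
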